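(* Let $\alpha>1$, and suppose that both $f$ and $Pf$ belong to $\mathcal{M}_\alpha$. Then for all $x>0$, $(Vf)(x)=(P(Pf))(x)$, i.e. the Voronoi operator equals the iterated Müntz operator $P^2$.
   Context: For $\alpha>1$, $\mathcal{M}_\alpha$ denotes the class of functions $f:[0,\infty)\to\mathbb{C}$ with $f\in C^{2}[0,\infty)$ and $f^{(j)}(x)=O(x^{-\alpha-j})$ as $x\to\infty$ for $j=0,1,2$. The Müntz operator is $(Pf)(x)=\sum_{n=1}^\infty f(nx)-\frac1x\int_0^\infty f(y)\,dy$, $x>0$ (extended continuously to $x=0$ when it is required to lie in $\mathcal{M}_\alpha$). The Voronoi operator is $(Vf)(x)=\sum_{n=1}^\infty d(n)f(nx)-\int_0^\infty f(xy)(\log y+2\gamma)\,dy$, where $d(n)$ is the number of divisors of $n$ and $\gamma$ is Euler's constant. *)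

theory Defs
  imports "HOL-Analysis.Analysis" "HOL-Library.Landau_Symbols"
begin

text \<open>The class M_alpha: f is C^2 on [0,oo) (one-sided derivatives at 0) and
  f^(j)(x) = O(x^(-alpha-j)) as x -> oo for j = 0,1,2.  Only values on [0,oo) matter.\<close>
definition M_class :: "real \<Rightarrow> (real \<Rightarrow> complex) set" where
  "M_class \<alpha> = {f. \<exists>f1 f2 :: real \<Rightarrow> complex.
      (\<forall>x\<ge>0. (f has_vector_derivative f1 x) (at x within {0..})) \<and>
      (\<forall>x\<ge>0. (f1 has_vector_derivative f2 x) (at x within {0..})) \<and>
      continuous_on {0..} f2 \<and>
      (\<lambda>x. norm (f x)) \<in> O[at_top](\<lambda>x. x powr (-\<alpha>)) \<and>
      (\<lambda>x. norm (f1 x)) \<in> O[at_top](\<lambda>x. x powr (-\<alpha> - 1)) \<and>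
      (\<lambda>x. norm (f2 x)) \<in> O[at_top](\<lambda>x. x powr (-\<alpha> - 2))}"

text \<open>Muentz operator (meaningful for x > 0).\<close>
definition muentz :: "(real \<Rightarrow> complex) \<Rightarrow> real \<Rightarrow> complex" where
  "muentz f x = (\<Sum>n. f (real (Suc n) * x)) - complex_of_real (1 / x) * integral {0..} f"

definition divisor_count :: "nat \<Rightarrow> nat" where
  "divisor_count n = card {k. k dvd n}"

definition voronoi :: "(real \<Rightarrow> complex) \<Rightarrow> real \<Rightarrow> complex" where
  "voronoi f x = (\<Sum>n. of_nat (divisor_count (Suc n)) * f (real (Suc n) * x))
     - integral {0..} (\<lambda>y. f (x * y) * complex_of_real (ln y + 2 * euler_mascheroni))"

end

theory Submission
  imports Defs "HOL-Real_Asymp.Real_Asymp"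
begin

lemma image_mult_atLeast:
  fixes c a :: real assumes "c > 0"
  shows "(\<lambda>t. c * t) ` {a..} = {c*a..}"
proof
  show "(\<lambda>t. c * t) ` {a..} \<subseteq> {c*a..}" using assms by auto
  show "{c*a..} \<subseteq> (\<lambda>t. c * t) ` {a..}"
  proof
    fix y assume "y \<in> {c*a..}"
    then have "y / c \<in> {a..}" "y = c * (y / c)" using assms by (auto simp: field_simps)
    then show "y \<in> (\<lambda>t. c * t) ` {a..}" by blast
  qed
qed

lemma scale_integral:
  fixes f :: "real \<Rightarrow> complex"
  assumes c: "c > 0" and f: "f absolutely_integrable_on {c*a..}"
  shows "(\<lambda>t. f (c*t)) absolutely_integrable_on {a..}"
    and "integral {a..} (\<lambda>t. f (c*t)) = integral {c*a..} f / c"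
proof -
  have der: "\<And>x. x \<in> {a..} \<Longrightarrow> ((\<lambda>t. c * t) has_field_derivative c) (at x within {a..})"
    by (auto intro!: derivative_eq_intros)
  have inj: "inj_on (\<lambda>t. c * t) {a..}" using c by (auto simp: inj_on_def)
  have "(\<lambda>x. \<bar>c\<bar> *\<^sub>R f (c * x)) absolutely_integrable_on {a..} \<and>
        integral {a..} (\<lambda>x. \<bar>c\<bar> *\<^sub>R f (c * x)) = integral {c*a..} f"
  proof -
    have L: "{a..} \<in> sets lebesgue" by simp
    note cv = has_absolute_integral_change_of_variables_real[of "{a..}" "\<lambda>t. c * t" "\<lambda>_. c" f
        "integral {c*a..} f", OF L der inj]
    have im: "(\<lambda>t. c * t) ` {a..} = {c*a..}" by (rule image_mult_atLeast[OF c])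
    have "f absolutely_integrable_on (\<lambda>t. c*t) ` {a..} \<and> integral ((\<lambda>t. c*t) ` {a..}) f = integral {c*a..} f"
      unfolding im using f by simp
    then show ?thesis using cv by blast
  qed
  then have 1: "(\<lambda>x. c *\<^sub>R f (c * x)) absolutely_integrable_on {a..}"
     and 2: "integral {a..} (\<lambda>x. c *\<^sub>R f (c * x)) = integral {c*a..} f"
    using c by auto
  have "(\<lambda>x. (1/c) *\<^sub>R (c *\<^sub>R f (c * x))) absolutely_integrable_on {a..}"
    using absolutely_integrable_scaleR_left[OF 1] by blast
  then show "(\<lambda>t. f (c*t)) absolutely_integrable_on {a..}" using c by simp
  have "integral {a..} (\<lambda>x. c *\<^sub>R f (c * x)) = c *\<^sub>R integral {a..} (\<lambda>x. f (c * x))"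
    by (rule integral_cmul)
  with 2 show "integral {a..} (\<lambda>t. f (c*t)) = integral {c*a..} f / c"
    using c by (simp add: scaleR_conv_of_real field_simps)
qed


lemma negl_0: "negligible ({0::real..} - {0<..} \<union> ({0<..} - {0..}))"
proof (rule negligible_subset[of "{0}"])
  show "{0::real..} - {0<..} \<union> ({0<..} - {0..}) \<subseteq> {0}" by auto
qed simp

lemma integrable_0_open:
  fixes f :: "real \<Rightarrow> 'a::banach"
  shows "f integrable_on {0..} \<longleftrightarrow> f integrable_on {0<..}"
  by (rule integrable_spike_set_eq[OF negl_0])

lemma integral_0_open:
  fixes f :: "real \<Rightarrow> 'a::banach"
  shows "integral {0..} f = integral {0<..} f"
proof (rule integral_spike_set)
  show "negligible {x \<in> {0..} - {0<..}. f x \<noteq> 0}"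
    by (rule negligible_subset[OF negl_0]) blast
  show "negligible {x \<in> {0<..} - {0..}. f x \<noteq> 0}"
    by (rule negligible_subset[OF negl_0]) blast
qed
lemma abs_integrable_0_open:
  fixes f :: "real \<Rightarrow> 'a::euclidean_space"
  shows "f absolutely_integrable_on {0..} \<longleftrightarrow> f absolutely_integrable_on {0<..}"
  unfolding absolutely_integrable_on_def by (simp only: integrable_0_open[of f] integrable_0_open[of "\<lambda>x. norm (f x)"])

lemma dominator_integrable:
  fixes c g \<beta> :: real
  assumes "0 \<le> g" "g < 1" "\<beta> > 1"
  shows "(\<lambda>t. if t \<le> 1 then c * t powr (-g) else c * t powr (-\<beta>)) integrable_on {0<..}"
proof -
  have i1: "(\<lambda>t. t powr (-g)) integrable_on {0..1}"
    by (rule integrable_on_powr_from_0) (use assms in auto)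
  have i1c: "(\<lambda>t. c * t powr (-g)) integrable_on {0..1}"
    using integrable_on_cmult_left[OF i1] by simp
  have i1': "(\<lambda>t. c * t powr (-g)) integrable_on {0<..1}"
  proof (rule integrable_spike_set[OF i1c])
    show "negligible {x \<in> {0..1} - {0<..1}. c * x powr - g \<noteq> 0}"
      by (rule negligible_subset[of "{0}"]) auto
    show "negligible {x \<in> {0<..1} - {0..1}. c * x powr - g \<noteq> 0}"
      by (rule negligible_subset[of "{}"]) auto
  qed
  have i2: "(\<lambda>t. t powr (-\<beta>)) integrable_on {1..}"
    using has_integral_powr_to_inf[of "-\<beta>" 1] assms by (auto simp: integrable_on_def)
  have i2': "(\<lambda>t. c * t powr (-\<beta>)) integrable_on {1..}"
    using integrable_on_cmult_left[OF i2] by simp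
  have a: "(\<lambda>t. if t \<le> 1 then c * t powr (-g) else c * t powr (-\<beta>)) integrable_on {0<..1}"
    by (rule integrable_eq[OF i1']) auto
  have b: "(\<lambda>t. if t \<le> 1 then c * t powr (-g) else c * t powr (-\<beta>)) integrable_on {1..}"
    by (rule integrable_spike[OF i2', of "{1}"]) auto
  have "(\<lambda>t. if t \<le> 1 then c * t powr (-g) else c * t powr (-\<beta>)) integrable_on ({0<..1} \<union> {1..})"
    by (rule integrable_Un[OF _ a b]) (rule negligible_subset[of "{1}"], auto)
  moreover have "{0<..1} \<union> {1..} = {0::real<..}" by auto
  ultimately show ?thesis by simp
qed

lemma M_cont:
  assumes "f \<in> M_class \<alpha>" shows "continuous_on {0..} f"
proof -
  obtain f1 where d: "\<forall>x\<ge>0. (f has_vector_derivative f1 x) (at x within {0..})"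
    using assms unfolding M_class_def by blast
  show ?thesis unfolding continuous_on_eq_continuous_within
    using d has_vector_derivative_continuous by fastforce
qed

lemma M_bigo:
  assumes "f \<in> M_class \<alpha>" shows "(\<lambda>x. norm (f x)) \<in> O[at_top](\<lambda>x. x powr (-\<alpha>))"
  using assms unfolding M_class_def by blast

lemma bound_from_bigo:
  fixes f :: "real \<Rightarrow> complex"
  assumes cont: "continuous_on {0..} f"
    and big: "(\<lambda>x. norm (f x)) \<in> O[at_top](\<lambda>x. x powr (-\<alpha>))"
    and a: "\<alpha> \<ge> 0"
  shows "\<exists>K. \<forall>t\<ge>0. norm (f t) \<le> K \<and> (t > 0 \<longrightarrow> norm (f t) \<le> K * t powr (-\<alpha>))"
proof -
  obtain c where c: "c > 0" and ev: "eventually (\<lambda>x. norm (norm (f x)) \<le> c * norm (x powr (-\<alpha>))) at_top"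
    using big by (elim landau_o.bigE)
  obtain T where T: "\<And>x. x \<ge> T \<Longrightarrow> norm (norm (f x)) \<le> c * norm (x powr (-\<alpha>))"
    using ev unfolding eventually_at_top_linorder by blast
  define T' where "T' = max T 1"
  have T'1: "T' \<ge> 1" by (simp add: T'_def)
  have "compact ((\<lambda>t. f t) ` {0..T'})"
    by (rule compact_continuous_image[OF continuous_on_subset[OF cont]]) auto
  then obtain B where B: "B > 0" "\<And>t. t \<in> {0..T'} \<Longrightarrow> norm (f t) \<le> B"
    using compact_imp_bounded bounded_pos by (metis imageI)
  define K where "K = max (max B c) (B * T' powr \<alpha>)"
  have big1: "norm (f t) \<le> c * t powr (-\<alpha>)" if "t \<ge> T'" for t
  proof -
    have "t \<ge> T" "t > 0" using that T'1 by (auto simp: T'_def)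
    then show ?thesis using T[of t] by simp
  qed
  show ?thesis
  proof (intro exI allI impI conjI)
    fix t :: real assume t: "t \<ge> 0"
    show "norm (f t) \<le> K"
    proof (cases "t \<le> T'")
      case True then show ?thesis using B(2)[of t] t by (auto simp: K_def)
    next
      case False
      then have "norm (f t) \<le> c * t powr (-\<alpha>)" using big1 by simp
      also have "t powr (-\<alpha>) \<le> 1" using powr_mono2'[of "-\<alpha>" 1 t] False T'1 a by simp
      then have "c * t powr (-\<alpha>) \<le> c" using c by (simp add: mult_left_le)
      finally show ?thesis by (auto simp: K_def)
    qed
    assume tp: "t > 0"
    show "norm (f t) \<le> K * t powr (-\<alpha>)"
    proof (cases "t \<le> T'")
      case True
      have "T' powr (-\<alpha>) \<le> t powr (-\<alpha>)" using True tp a by (intro powr_mono2') auto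
      then have m1: "B * T' powr \<alpha> * T' powr (-\<alpha>) \<le> B * T' powr \<alpha> * t powr (-\<alpha>)"
        using B by (intro mult_left_mono) auto
      have m2: "B * T' powr \<alpha> * T' powr (-\<alpha>) = B" using T'1 by (simp add: powr_minus field_simps)
      have m3: "B * T' powr \<alpha> * t powr (-\<alpha>) \<le> K * t powr (-\<alpha>)" by (intro mult_right_mono) (auto simp: K_def)
      have m4: "norm (f t) \<le> B" using B(2)[of t] True tp by auto
      show ?thesis using m1 m2 m3 m4 by linarith
    next
      case False
      then have "norm (f t) \<le> c * t powr (-\<alpha>)" using big1 by simp
      also have "\<dots> \<le> K * t powr (-\<alpha>)" by (intro mult_right_mono) (auto simp: K_def)
      finally show ?thesis .
    qed
  qed
qed

lemma abs_int_decay: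
  fixes f :: "real \<Rightarrow> complex"
  assumes cont: "continuous_on {0<..} f" and a: "\<alpha> > 1"
    and bd: "\<And>t. t > 0 \<Longrightarrow> norm (f t) \<le> K \<and> norm (f t) \<le> K * t powr (-\<alpha>)"
  shows "f absolutely_integrable_on {0<..}"
proof (rule measurable_bounded_by_integrable_imp_absolutely_integrable)
  show "f \<in> borel_measurable (lebesgue_on {0<..})"
    by (rule continuous_imp_measurable_on_sets_lebesgue[OF cont]) simp
  show "{0::real<..} \<in> sets lebesgue" by simp
  show "(\<lambda>t. if t \<le> 1 then K * t powr (-0) else K * t powr (-\<alpha>)) integrable_on {0<..}"
    by (rule dominator_integrable) (use a in auto)
  fix t :: real assume "t \<in> {0<..}"
  then show "norm (f t) \<le> (if t \<le> 1 then K * t powr (-0) else K * t powr (-\<alpha>))"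
    using bd[of t] by auto
qed

lemma ln_small_bound:
  fixes t :: real assumes "0 < t" "t \<le> 1"
  shows "\<bar>ln t\<bar> \<le> 2 * t powr (-1/2)"
proof -
  have u: "t powr (-1/2) > 0" using assms by simp
  have "ln (t powr (-1/2)) \<le> t powr (-1/2) - 1" by (rule ln_le_minus_one[OF u])
  moreover have "ln (t powr (-1/2)) = (-1/2) * ln t" using assms by (simp add: ln_powr)
  moreover have "ln t \<le> 0" using assms by simp
  ultimately show ?thesis by linarith
qed

lemma ln_large_bound:
  fixes t \<delta> :: real assumes "1 \<le> t" "\<delta> > 0"
  shows "\<bar>ln t\<bar> \<le> t powr \<delta> / \<delta>"
proof -
  have u: "t powr \<delta> > 0" using assms by simp
  have "ln (t powr \<delta>) \<le> t powr \<delta> - 1" by (rule ln_le_minus_one[OF u])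
  moreover have "ln (t powr \<delta>) = \<delta> * ln t" using assms by (simp add: ln_powr)
  moreover have "ln t \<ge> 0" using assms by simp
  ultimately have "\<delta> * \<bar>ln t\<bar> \<le> t powr \<delta>" by simp
  then show ?thesis using assms by (simp add: field_simps)
qed

lemma abs_int_ln:
  fixes f :: "real \<Rightarrow> complex"
  assumes cont: "continuous_on {0<..} f" and a: "\<alpha> > 1"
    and bd: "\<And>t. t > 0 \<Longrightarrow> norm (f t) \<le> K \<and> norm (f t) \<le> K * t powr (-\<alpha>)"
  shows "(\<lambda>t. f t * of_real (ln t)) absolutely_integrable_on {0<..}"
proof (rule measurable_bounded_by_integrable_imp_absolutely_integrable)
  define \<delta> where "\<delta> = (\<alpha> - 1) / 2"
  have \<delta>: "\<delta> > 0" using a by (simp add: \<delta>_def)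
  define c where "c = K * (2 + 1 / \<delta>)"
  show "(\<lambda>t. f t * of_real (ln t)) \<in> borel_measurable (lebesgue_on {0<..})"
    by (rule continuous_imp_measurable_on_sets_lebesgue) (auto intro!: continuous_intros cont)
  show "{0::real<..} \<in> sets lebesgue" by simp
  show "(\<lambda>t. if t \<le> 1 then c * t powr (-(1/2)) else c * t powr (-((\<alpha>+1)/2))) integrable_on {0<..}"
    by (rule dominator_integrable) (use a in auto)
  fix t :: real assume t: "t \<in> {0<..}"
  have K: "K \<ge> 0" using bd[of 1] by (auto intro: order_trans[OF norm_ge_zero])
  have n: "norm (f t * of_real (ln t)) = norm (f t) * \<bar>ln t\<bar>" by (simp add: norm_mult)
  show "norm (f t * of_real (ln t)) \<le> (if t \<le> 1 then c * t powr (-(1/2)) else c * t powr (-((\<alpha>+1)/2)))"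
  proof (cases "t \<le> 1")
    case True
    have "norm (f t) * \<bar>ln t\<bar> \<le> K * (2 * t powr (-1/2))"
      using bd[of t] t True ln_small_bound[of t] K by (intro mult_mono) auto
    also have "\<dots> \<le> c * t powr (-(1/2))" unfolding c_def using K \<delta>
      by (simp add: algebra_simps)
    finally show ?thesis using True n by simp
  next
    case False
    have "norm (f t) * \<bar>ln t\<bar> \<le> (K * t powr (-\<alpha>)) * (t powr \<delta> / \<delta>)"
      using bd[of t] t False ln_large_bound[of t \<delta>] \<delta> K by (intro mult_mono) auto
    also have "\<dots> = (K / \<delta>) * (t powr (-\<alpha>) * t powr \<delta>)" by simp
    also have "\<dots> = (K / \<delta>) * t powr (-((\<alpha>+1)/2))"
    proof -
      have e: "-\<alpha> + \<delta> = -((\<alpha>+1)/2)" by (simp add: \<delta>_def field_simps)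
      show ?thesis using powr_add[of t "-\<alpha>" \<delta>] e by simp
    qed
    also have "\<dots> \<le> c * t powr (-((\<alpha>+1)/2))" unfolding c_def using K \<delta>
      by (intro mult_right_mono) (auto simp: field_simps)
    finally show ?thesis using False n by simp
  qed
qed

locale core =
  fixes \<phi> :: "real \<Rightarrow> complex" and K \<alpha> :: real
  assumes cont: "continuous_on {0<..} \<phi>"
    and a: "\<alpha> > 1"
    and bd: "\<And>t. t > 0 \<Longrightarrow> norm (\<phi> t) \<le> K \<and> norm (\<phi> t) \<le> K * t powr (-\<alpha>)"
begin

lemma K_nonneg: "K \<ge> 0"
  using bd[of 1] by (auto intro: order_trans[OF norm_ge_zero])

lemma phi_abs: "\<phi> absolutely_integrable_on {0<..}"
  by (rule abs_int_decay[OF cont a bd])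

lemma phi_abs_sub: "b > 0 \<Longrightarrow> \<phi> absolutely_integrable_on {b..}"
  by (rule set_integrable_subset[OF phi_abs]) auto

lemma phi_ln_abs: "(\<lambda>t. \<phi> t * of_real (ln t)) absolutely_integrable_on {0<..}"
  by (rule abs_int_ln[OF cont a bd])

definition Z where "Z = (\<Sum>n. real (Suc n) powr (-\<alpha>))"

lemma Z_summable: "summable (\<lambda>n. real (Suc n) powr (-\<alpha>))"
proof -
  have "summable (\<lambda>n. real n powr (-\<alpha>))" using a summable_real_powr_iff by simp
  then have "summable (\<lambda>n. real (n + 1) powr (-\<alpha>))"
    by (rule summable_ignore_initial_segment)
  then show ?thesis by simp
qed

lemma bd_scaled: "t > 0 \<Longrightarrow> norm (\<phi> (real (Suc n) * t)) \<le> K * t powr (-\<alpha>) * real (Suc n) powr (-\<alpha>)"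
proof -
  assume t: "t > 0"
  have "norm (\<phi> (real (Suc n) * t)) \<le> K * (real (Suc n) * t) powr (-\<alpha>)"
    using bd[of "real (Suc n) * t"] t by auto
  also have "(real (Suc n) * t) powr (-\<alpha>) = real (Suc n) powr (-\<alpha>) * t powr (-\<alpha>)"
    using t by (simp add: powr_mult)
  finally show ?thesis by (simp add: algebra_simps)
qed

lemma summable_G: "t > 0 \<Longrightarrow> summable (\<lambda>n. norm (\<phi> (real (Suc n) * t)))"
  by (rule summable_comparison_test[OF _ summable_mult[OF Z_summable, of "K * t powr (-\<alpha>)"]])
     (use bd_scaled in auto)

lemma scaled_abs: "\<epsilon> > 0 \<Longrightarrow> (\<lambda>t. \<phi> (real (Suc n) * t)) absolutely_integrable_on {\<epsilon>..}"
  and scaled_int: "\<epsilon> > 0 \<Longrightarrow> integral {\<epsilon>..} (\<lambda>t. \<phi> (real (Suc n) * t)) = integral {real (Suc n) * \<epsilon>..} \<phi> / real (Suc n)"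
proof -
  assume e: "\<epsilon> > 0"
  have p: "\<phi> absolutely_integrable_on {real (Suc n) * \<epsilon>..}" using e by (intro phi_abs_sub) auto
  show "(\<lambda>t. \<phi> (real (Suc n) * t)) absolutely_integrable_on {\<epsilon>..}"
    by (rule scale_integral(1)[OF _ p]) simp
  show "integral {\<epsilon>..} (\<lambda>t. \<phi> (real (Suc n) * t)) = integral {real (Suc n) * \<epsilon>..} \<phi> / real (Suc n)"
    using scale_integral(2)[OF _ p] by simp
qed

lemma trunc_sums:
  fixes G :: "real \<Rightarrow> complex"
  assumes G: "\<And>t. t > 0 \<Longrightarrow> G t = (\<Sum>n. \<phi> (real (Suc n) * t))"
    and e: "\<epsilon> > 0"
  shows "(\<lambda>n. integral {real (Suc n) * \<epsilon>..} \<phi> / real (Suc n)) sums integral {\<epsilon>..} G"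
proof -
  define F where "F M t = (\<Sum>n<M. \<phi> (real (Suc n) * t))" for M t
  define h where "h t = K * Z * t powr (-\<alpha>)" for t
  have Fint: "F M integrable_on {\<epsilon>..}" for M
    unfolding F_def
    by (rule integrable_sum) (use scaled_abs[OF e] in \<open>auto simp: absolutely_integrable_on_def\<close>)
  have hint: "h integrable_on {\<epsilon>..}"
    using has_integral_powr_to_inf[of "-\<alpha>" \<epsilon>] a e integrable_on_mult_right[of "\<lambda>t. t powr (-\<alpha>)" "{\<epsilon>..}" "K * Z"]
    unfolding h_def by (auto simp: integrable_on_def)
  have le: "norm (F M t) \<le> h t" if t: "t \<in> {\<epsilon>..}" for M t
  proof -
    have tp: "t > 0" using t e by auto
    have "norm (F M t) \<le> (\<Sum>n<M. norm (\<phi> (real (Suc n) * t)))"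
      unfolding F_def by (rule norm_sum)
    also have "\<dots> \<le> (\<Sum>n<M. K * t powr (-\<alpha>) * real (Suc n) powr (-\<alpha>))"
      by (intro sum_mono bd_scaled tp)
    also have "\<dots> = K * t powr (-\<alpha>) * (\<Sum>n<M. real (Suc n) powr (-\<alpha>))"
      by (simp add: sum_distrib_left)
    also have "(\<Sum>n<M. real (Suc n) powr (-\<alpha>)) \<le> Z"
      unfolding Z_def by (rule sum_le_suminf[OF Z_summable]) auto
    then have "K * t powr (-\<alpha>) * (\<Sum>n<M. real (Suc n) powr (-\<alpha>)) \<le> K * t powr (-\<alpha>) * Z"
      using K_nonneg by (intro mult_left_mono) auto
    finally show ?thesis by (simp add: h_def algebra_simps)
  qed
  have conv: "(\<lambda>M. F M t) \<longlonglongrightarrow> G t" if t: "t \<in> {\<epsilon>..}" for t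
  proof -
    have tp: "t > 0" using t e by auto
    have "summable (\<lambda>n. \<phi> (real (Suc n) * t))"
      by (rule summable_norm_cancel[OF summable_G[OF tp]])
    then have "(\<lambda>n. \<phi> (real (Suc n) * t)) sums G t" using G[OF tp] by (simp add: summable_sums)
    then show ?thesis unfolding F_def sums_def .
  qed
  have lim: "(\<lambda>M. integral {\<epsilon>..} (F M)) \<longlonglongrightarrow> integral {\<epsilon>..} G"
    by (rule dominated_convergence(2)[OF Fint hint le conv])
  have "integral {\<epsilon>..} (F M) = (\<Sum>n<M. integral {real (Suc n) * \<epsilon>..} \<phi> / real (Suc n))" for M
  proof -
    have "integral {\<epsilon>..} (F M) = (\<Sum>n<M. integral {\<epsilon>..} (\<lambda>t. \<phi> (real (Suc n) * t)))"
      unfolding F_def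
      by (rule integral_sum) (use scaled_abs[OF e] in \<open>auto simp: absolutely_integrable_on_def\<close>)
    then show ?thesis using scaled_int[OF e] by simp
  qed
  then show ?thesis using lim unfolding sums_def by simp
qed

end

lemma harm_sum:
  fixes e u :: real assumes e: "e > 0"
  shows "(\<Sum>n<M. if u \<in> {real (Suc n) * e..} then inverse (of_nat (Suc n)) else 0) =
         (harm (min M (nat \<lfloor>u / e\<rfloor>)) :: complex)"
proof -
  have iff: "u \<in> {real (Suc n) * e..} \<longleftrightarrow> n < nat \<lfloor>u / e\<rfloor>" for n
  proof -
    have "u \<in> {real (Suc n) * e..} \<longleftrightarrow> real (Suc n) \<le> u / e" using e by (auto simp: field_simps)
    also have "\<dots> \<longleftrightarrow> int (Suc n) \<le> \<lfloor>u / e\<rfloor>" by (simp add: le_floor_iff)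
    also have "\<dots> \<longleftrightarrow> n < nat \<lfloor>u / e\<rfloor>" by linarith
    finally show ?thesis .
  qed
  have "(\<Sum>n<M. if u \<in> {real (Suc n) * e..} then inverse (of_nat (Suc n)) else (0::complex)) =
        (\<Sum>n\<in>{n\<in>{..<M}. n < nat \<lfloor>u / e\<rfloor>}. inverse (of_nat (Suc n)))"
  proof -
    have "(\<Sum>n<M. if u \<in> {real (Suc n) * e..} then inverse (of_nat (Suc n)) else (0::complex)) =
          (\<Sum>n<M. if n < nat \<lfloor>u / e\<rfloor> then inverse (of_nat (Suc n)) else (0::complex))"
      by (rule sum.cong[OF refl]) (simp only: iff)
    also have "\<dots> = (\<Sum>n\<in>{n\<in>{..<M}. n < nat \<lfloor>u / e\<rfloor>}. inverse (of_nat (Suc n)))"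
      by (rule sum.inter_filter[symmetric]) simp
    finally show ?thesis .
  qed
  also have "{n\<in>{..<M}. n < nat \<lfloor>u / e\<rfloor>} = {..<min M (nat \<lfloor>u / e\<rfloor>)}" by auto
  finally show ?thesis by (simp add: harm_altdef)
qed

lemma harm_le_ln: "k > 0 \<Longrightarrow> harm k \<le> 1 + ln (real k)"
  using euler_mascheroni_sequence_decreasing[of 1 k] by (simp add: harm_altdef)

context core begin

lemma harm_sums:
  assumes e: "e > 0"
  shows "(\<lambda>n. integral {real (Suc n) * e..} \<phi> / real (Suc n)) sums
           integral {0<..} (\<lambda>u. \<phi> u * of_real (harm (nat \<lfloor>u / e\<rfloor>)))"
    and "(\<lambda>u. \<phi> u * of_real (harm (nat \<lfloor>u / e\<rfloor>))) integrable_on {0<..}"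
proof -
  define P where "P M u = (\<Sum>n<M. if u \<in> {real (Suc n) * e..} then \<phi> u * inverse (of_nat (Suc n)) else 0)" for M u
  define h where "h u = norm (\<phi> u * of_real (ln u)) + (1 + \<bar>ln e\<bar>) * norm (\<phi> u)" for u
  have Pe: "P M u = \<phi> u * harm (min M (nat \<lfloor>u / e\<rfloor>))" for M u
  proof -
    have "P M u = \<phi> u * (\<Sum>n<M. if u \<in> {real (Suc n) * e..} then inverse (of_nat (Suc n)) else 0)"
      unfolding P_def sum_distrib_left by (rule sum.cong) auto
    then show ?thesis using harm_sum[OF e] by simp
  qed
  have term_int: "(\<lambda>u. if u \<in> {real (Suc n) * e..} then \<phi> u * inverse (of_nat (Suc n)) else 0) integrable_on {0<..}" for n
  proof -
    have "\<phi> integrable_on {real (Suc n) * e..}"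
      using phi_abs_sub[of "real (Suc n) * e"] e by (auto simp: absolutely_integrable_on_def)
    moreover have "{real (Suc n) * e..} \<inter> {0<..} = {real (Suc n) * e..}"
      using e by (auto intro: less_le_trans[of 0 "real (Suc n) * e"])
    ultimately have "(\<lambda>u. \<phi> u * inverse (of_nat (Suc n))) integrable_on ({real (Suc n) * e..} \<inter> {0<..})"
      by (simp add: integrable_on_mult_left)
    then show ?thesis by (subst integrable_restrict_Int)
  qed
  have term_integral: "integral {0<..} (\<lambda>u. if u \<in> {real (Suc n) * e..} then \<phi> u * inverse (of_nat (Suc n)) else 0)
       = integral {real (Suc n) * e..} \<phi> / real (Suc n)" for n
  proof -
    have s: "{real (Suc n) * e..} \<inter> {0<..} = {real (Suc n) * e..}"
      using e by (auto intro: less_le_trans[of 0 "real (Suc n) * e"])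
    show ?thesis by (subst integral_restrict_Int, subst s) (simp add: divide_inverse)
  qed
  have Pint: "P M integrable_on {0<..}" for M
    unfolding P_def by (rule integrable_sum) (use term_int in auto)
  have hint: "h integrable_on {0<..}"
  proof -
    have 1: "(\<lambda>u. norm (\<phi> u * of_real (ln u))) integrable_on {0<..}"
      using phi_ln_abs by (auto simp: absolutely_integrable_on_def)
    have 2: "(\<lambda>u. norm (\<phi> u)) integrable_on {0<..}"
      using phi_abs by (auto simp: absolutely_integrable_on_def)
    show ?thesis unfolding h_def
      by (intro integrable_add 1 integrable_on_mult_right 2)
  qed
  have le: "norm (P M u) \<le> h u" if u: "u \<in> {0<..}" for M u
  proof -
    define k where "k = nat \<lfloor>u / e\<rfloor>"
    have "norm (P M u) = norm (\<phi> u) * harm (min M k)"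
      unfolding Pe k_def by (simp add: norm_mult norm_harm)
    also have "\<dots> \<le> norm (\<phi> u) * harm k" by (intro mult_left_mono harm_mono) auto
    also have "harm k \<le> 1 + \<bar>ln u\<bar> + \<bar>ln e\<bar>"
    proof (cases "k = 0")
      case True then show ?thesis by (simp add: harm_altdef)
    next
      case False
      then have "harm k \<le> 1 + ln (real k)" by (intro harm_le_ln) auto
      also have "real k \<le> u / e" unfolding k_def using u e by (simp add: floor_divide_lower)
      then have "ln (real k) \<le> ln (u / e)" using False by (intro ln_mono) auto
      also have "ln (u / e) = ln u - ln e" using u e by (simp add: ln_div)
      finally show ?thesis by linarith
    qed
    then have "norm (\<phi> u) * harm k \<le> norm (\<phi> u) * (1 + \<bar>ln u\<bar> + \<bar>ln e\<bar>)"
      by (intro mult_left_mono) auto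
    also have "\<dots> = h u" unfolding h_def by (simp add: norm_mult algebra_simps)
    finally show ?thesis by simp
  qed
  have conv: "(\<lambda>M. P M u) \<longlonglongrightarrow> \<phi> u * of_real (harm (nat \<lfloor>u / e\<rfloor>))" if "u \<in> {0<..}" for u
  proof (rule tendsto_eventually)
    show "\<forall>\<^sub>F M in sequentially. P M u = \<phi> u * of_real (harm (nat \<lfloor>u / e\<rfloor>))"
      using eventually_ge_at_top[of "nat \<lfloor>u / e\<rfloor>"]
      by eventually_elim (simp add: Pe of_real_harm min_absorb2)
  qed
  have lim: "(\<lambda>M. integral {0<..} (P M)) \<longlonglongrightarrow> integral {0<..} (\<lambda>u. \<phi> u * of_real (harm (nat \<lfloor>u / e\<rfloor>)))"
    by (rule dominated_convergence(2)[OF Pint hint le conv])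
  have "integral {0<..} (P M) = (\<Sum>n<M. integral {real (Suc n) * e..} \<phi> / real (Suc n))" for M
    unfolding P_def by (subst integral_sum) (use term_int term_integral in auto)
  then show "(\<lambda>n. integral {real (Suc n) * e..} \<phi> / real (Suc n)) sums
           integral {0<..} (\<lambda>u. \<phi> u * of_real (harm (nat \<lfloor>u / e\<rfloor>)))"
    using lim unfolding sums_def by simp
  show "(\<lambda>u. \<phi> u * of_real (harm (nat \<lfloor>u / e\<rfloor>))) integrable_on {0<..}"
    by (rule dominated_convergence(1)[OF Pint hint le conv])
qed

end

lemma harm_floor_lim:
  fixes u :: real assumes u: "u > 0"
  shows "(\<lambda>N. harm (nat \<lfloor>u * real (Suc N)\<rfloor>) - ln (real (Suc N)) - euler_mascheroni) \<longlonglongrightarrow> ln u"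
proof -
  define m where "m N = u * real (Suc N)" for N
  define k where "k N = nat \<lfloor>m N\<rfloor>" for N
  have m_lim: "filterlim m at_top sequentially"
    unfolding m_def using u by real_asymp
  have k_lim: "filterlim k at_top sequentially"
    unfolding k_def
    by (rule filterlim_compose[OF filterlim_nat_sequentially filterlim_compose[OF filterlim_floor_sequentially m_lim]])
  have A: "(\<lambda>N. harm (k N) - ln (real (k N))) \<longlonglongrightarrow> euler_mascheroni"
    by (rule filterlim_compose[OF euler_mascheroni_LIMSEQ k_lim])
  have mpos: "m N > 0" for N unfolding m_def using u by simp
  have B: "(\<lambda>N. real (k N) / m N) \<longlonglongrightarrow> 1"
  proof (rule tendsto_sandwich)
    show "\<forall>\<^sub>F N in sequentially. 1 - inverse (m N) \<le> real (k N) / m N"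
    proof (rule always_eventually, rule allI)
      fix N
      have "real (k N) \<ge> m N - 1" unfolding k_def using mpos[of N] by linarith
      then have "(m N - 1) / m N \<le> real (k N) / m N" using mpos[of N] by (intro divide_right_mono) auto
      moreover have "(m N - 1) / m N = 1 - inverse (m N)" using mpos[of N] by (simp add: field_simps)
      ultimately show "1 - inverse (m N) \<le> real (k N) / m N" by simp
    qed
    show "\<forall>\<^sub>F N in sequentially. real (k N) / m N \<le> 1"
    proof (rule always_eventually, rule allI)
      fix N
      have "real (k N) \<le> m N" unfolding k_def using mpos[of N] by linarith
      then show "real (k N) / m N \<le> 1" using mpos[of N] by (simp add: field_simps)
    qed
    show "(\<lambda>N. 1 - inverse (m N)) \<longlonglongrightarrow> 1"
      using tendsto_diff[OF tendsto_const tendsto_inverse_0_at_top[OF m_lim], of 1] by simp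
  qed simp
  have C: "(\<lambda>N. ln (real (k N) / m N)) \<longlonglongrightarrow> 0"
    using tendsto_ln[OF B] by simp
  have D: "(\<lambda>N. (harm (k N) - ln (real (k N)) - euler_mascheroni) + ln (real (k N) / m N) + ln u) \<longlonglongrightarrow> ln u"
    using tendsto_add[OF tendsto_add[OF tendsto_diff[OF A tendsto_const[of euler_mascheroni]] C] tendsto_const[of "ln u"]] by simp
  have ev: "\<forall>\<^sub>F N in sequentially. (harm (k N) - ln (real (k N)) - euler_mascheroni) + ln (real (k N) / m N) + ln u
        = harm (nat \<lfloor>u * real (Suc N)\<rfloor>) - ln (real (Suc N)) - euler_mascheroni"
    using filterlim_at_top[THEN iffD1, OF k_lim, rule_format, of 1]
  proof eventually_elim
    case (elim N)
    then have "ln (real (k N) / m N) = ln (real (k N)) - ln u - ln (real (Suc N))"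
      using mpos[of N] u by (simp add: ln_div m_def ln_mult)
    then show ?case by (simp add: k_def m_def)
  qed
  show ?thesis by (rule Lim_transform_eventually[OF D ev])
qed

lemma gamma_le_1: "euler_mascheroni \<le> (1::real)"
proof -
  have "euler_mascheroni \<le> harm 1 - ln (real (Suc 1)) + inverse (real (2 * 1))"
    using euler_mascheroni_bounds[of 1] by simp
  moreover have "harm 1 = (1::real)" by (simp add: harm_altdef)
  moreover have "2/3 \<le> ln (2::real)" by (rule ln2_ge_two_thirds)
  ultimately show ?thesis by simp
qed

lemma Q_bound:
  fixes u :: real assumes u: "u > 0"
  shows "\<bar>harm (nat \<lfloor>u * real (Suc N)\<rfloor>) - ln (real (Suc N)) - euler_mascheroni\<bar> \<le> \<bar>ln u\<bar> + 2"
proof -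
  define m where "m = u * real (Suc N)"
  define k where "k = nat \<lfloor>m\<rfloor>"
  have mpos: "m > 0" unfolding m_def using u by simp
  have lm: "ln m = ln u + ln (real (Suc N))" unfolding m_def using u by (simp add: ln_mult)
  have g0: "euler_mascheroni \<ge> (0::real)" using euler_mascheroni_pos by simp
  have g1: "euler_mascheroni \<le> (1::real)" by (rule gamma_le_1)
  have lN: "ln (real (Suc N)) \<ge> 0" by simp
  show ?thesis
  proof (cases "k = 0")
    case True
    then have "m < 1" unfolding k_def by linarith
    then have "ln m < 0" using mpos by simp
    have hk: "harm (nat \<lfloor>u * real (Suc N)\<rfloor>) = (0::real)"
      using True by (simp add: k_def m_def harm_altdef)
    have a1: "\<bar>0 - ln (real (Suc N)) - euler_mascheroni\<bar> = ln (real (Suc N)) + euler_mascheroni"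
    proof -
      have "0 - ln (real (Suc N)) - euler_mascheroni \<le> 0" using lN g0 by linarith
      then show ?thesis by (simp only: abs_if) (auto simp del: of_nat_Suc)
    qed
    have a2: "ln (real (Suc N)) \<le> \<bar>ln u\<bar>" using \<open>ln m < 0\<close> lm by linarith
    show ?thesis unfolding hk a1 using a2 g1 by linarith
  next
    case False
    have h1: "harm k - ln (real k) \<ge> 0" using False by (intro euler_mascheroni_sequence_nonneg) auto
    have h2: "harm k - ln (real k) \<le> 1" using harm_le_ln[of k] False by simp
    have km: "real k \<le> m" "m < real k + 1" unfolding k_def using mpos by linarith+
    have kp: "real k > 0" using False by simp
    have d1: "ln m - ln (real k) \<ge> 0" using km kp by simp
    have "ln m - ln (real k) = ln (m / real k)" using kp mpos by (simp add: ln_div)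
    also have "\<dots> \<le> m / real k - 1" using kp mpos by (intro ln_le_minus_one) simp
    also have "\<dots> \<le> 1"
    proof -
      have "m / real k \<le> (real k + 1) / real k" using km kp by (intro divide_right_mono) auto
      also have "\<dots> \<le> 2" using kp False by (simp add: field_simps)
      finally show ?thesis by simp
    qed
    finally have d2: "ln m - ln (real k) \<le> 1" .
    have eq: "harm k - ln (real (Suc N)) - euler_mascheroni
      = (harm k - ln (real k)) - (ln m - ln (real k)) + ln u - euler_mascheroni"
      using lm by simp
    show ?thesis unfolding k_def[symmetric] m_def[symmetric] eq
      using h1 h2 d1 d2 g0 g1 by linarith
  qed
qed

context core begin

lemma core_main:
  fixes G :: "real \<Rightarrow> complex"
  assumes I0: "integral {0<..} \<phi> = 0"
    and Gabs: "G absolutely_integrable_on {0<..}"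
    and G: "\<And>t. t > 0 \<Longrightarrow> G t = (\<Sum>n. \<phi> (real (Suc n) * t))"
  shows "integral {0<..} G = integral {0<..} (\<lambda>t. \<phi> t * of_real (ln t))"
proof -
  define e where "e N = 1 / real (Suc N)" for N
  have epos: "e N > 0" for N by (simp add: e_def)
  define H where "H N u = \<phi> u * of_real (harm (nat \<lfloor>u / e N\<rfloor>))" for N u
  define Q where "Q N u = \<phi> u * of_real (harm (nat \<lfloor>u * real (Suc N)\<rfloor>) - ln (real (Suc N)) - euler_mascheroni)" for N u
  have He: "H N u = \<phi> u * of_real (harm (nat \<lfloor>u * real (Suc N)\<rfloor>))" for N u
    by (simp add: H_def e_def)
  have phi_int: "\<phi> integrable_on {0<..}" using phi_abs by (auto simp: absolutely_integrable_on_def)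
  have eq1: "integral {e N..} G = integral {0<..} (H N)" for N
    using sums_unique2[OF trunc_sums[OF G epos] harm_sums(1)[OF epos]] unfolding H_def by simp
  have Hint: "H N integrable_on {0<..}" for N
    unfolding H_def by (rule harm_sums(2)[OF epos])
  have eq2: "integral {0<..} (H N) = integral {0<..} (Q N)" for N
  proof -
    have "Q N = (\<lambda>u. H N u - \<phi> u * of_real (ln (real (Suc N)) + euler_mascheroni))"
      by (auto simp: Q_def He algebra_simps)
    then have "integral {0<..} (Q N) = integral {0<..} (H N) - integral {0<..} (\<lambda>u. \<phi> u * of_real (ln (real (Suc N)) + euler_mascheroni))"
      using integral_diff[OF Hint integrable_on_mult_left[OF phi_int]] by simp
    also have "integral {0<..} (\<lambda>u. \<phi> u * of_real (ln (real (Suc N)) + euler_mascheroni)) = 0"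
      using I0 by simp
    finally show ?thesis by simp
  qed
  have Qint: "Q N integrable_on {0<..}" for N
  proof -
    have "Q N = (\<lambda>u. H N u - \<phi> u * of_real (ln (real (Suc N)) + euler_mascheroni))"
      by (auto simp: Q_def He algebra_simps)
    then show ?thesis using integrable_diff[OF Hint integrable_on_mult_left[OF phi_int]] by simp
  qed
  define h where "h u = norm (\<phi> u * of_real (ln u)) + 2 * norm (\<phi> u)" for u
  have hint: "h integrable_on {0<..}"
  proof -
    have 1: "(\<lambda>u. norm (\<phi> u * of_real (ln u))) integrable_on {0<..}"
      using phi_ln_abs by (auto simp: absolutely_integrable_on_def)
    have 2: "(\<lambda>u. norm (\<phi> u)) integrable_on {0<..}"
      using phi_abs by (auto simp: absolutely_integrable_on_def)
    show ?thesis unfolding h_def by (intro integrable_add 1 integrable_on_mult_right 2)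
  qed
  have Qle: "norm (Q N u) \<le> h u" if u: "u \<in> {0<..}" for N u
  proof -
    have "norm (Q N u) = norm (\<phi> u) * \<bar>harm (nat \<lfloor>u * real (Suc N)\<rfloor>) - ln (real (Suc N)) - euler_mascheroni\<bar>"
      by (simp only: Q_def norm_mult norm_of_real)
    also have "\<dots> \<le> norm (\<phi> u) * (\<bar>ln u\<bar> + 2)"
      using Q_bound[of u N] u by (intro mult_left_mono) auto
    also have "\<dots> = h u" by (simp add: h_def norm_mult algebra_simps)
    finally show ?thesis .
  qed
  have Qconv: "(\<lambda>N. Q N u) \<longlonglongrightarrow> \<phi> u * of_real (ln u)" if u: "u \<in> {0<..}" for u
    unfolding Q_def using u
    by (intro tendsto_mult tendsto_const tendsto_of_real harm_floor_lim) auto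
  have limQ: "(\<lambda>N. integral {0<..} (Q N)) \<longlonglongrightarrow> integral {0<..} (\<lambda>u. \<phi> u * of_real (ln u))"
    by (rule dominated_convergence(2)[OF Qint hint Qle Qconv])
  define R where "R N u = (if u \<in> {e N..} then G u else 0)" for N u
  have Gsub: "G integrable_on {e N..}" for N
    using set_integrable_subset[OF Gabs, of "{e N..}"] epos[of N]
    by (auto simp: absolutely_integrable_on_def intro: less_le_trans[of 0 "e N"])
  have sN: "{e N..} \<inter> {0<..} = {e N..}" for N using epos[of N] by (auto intro: less_le_trans[of 0 "e N"])
  have Rint: "R N integrable_on {0<..}" for N
    unfolding R_def by (subst integrable_restrict_Int, subst sN) (rule Gsub)
  have Rintegral: "integral {0<..} (R N) = integral {e N..} G" for N
    unfolding R_def by (subst integral_restrict_Int, subst sN) (rule refl)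
  have gint: "(\<lambda>u. norm (G u)) integrable_on {0<..}" using Gabs by (auto simp: absolutely_integrable_on_def)
  have Rle: "norm (R N u) \<le> norm (G u)" for N u by (simp add: R_def)
  have Rconv: "(\<lambda>N. R N u) \<longlonglongrightarrow> G u" if u: "u \<in> {0<..}" for u
  proof (rule tendsto_eventually)
    have "e \<longlonglongrightarrow> 0" unfolding e_def by real_asymp
    then have "\<forall>\<^sub>F N in sequentially. e N < u" using u by (auto simp: order_tendsto_iff)
    then show "\<forall>\<^sub>F N in sequentially. R N u = G u"
      by eventually_elim (simp add: R_def)
  qed
  have limR: "(\<lambda>N. integral {0<..} (R N)) \<longlonglongrightarrow> integral {0<..} G"
    by (rule dominated_convergence(2)[OF Rint gint Rle Rconv])
  have "(\<lambda>N. integral {0<..} (Q N)) \<longlonglongrightarrow> integral {0<..} G"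
    using limR by (simp add: Rintegral eq1 eq2)
  then show ?thesis using limQ LIMSEQ_unique by blast
qed

end

lemma suminf_infsum:
  fixes f :: "nat \<Rightarrow> complex"
  assumes "f summable_on UNIV" shows "suminf f = infsum f UNIV"
  using assms by (metis has_sum_imp_sums has_sum_infsum sums_unique)

definition Bset :: "nat \<Rightarrow> (nat \<times> nat) set" where
  "Bset k = {p. Suc (fst p) * Suc (snd p) = Suc k}"

lemma Bset_finite: "finite (Bset k)"
proof (rule finite_subset[of _ "{..k} \<times> {..k}"])
  show "Bset k \<subseteq> {..k} \<times> {..k}"
  proof
    fix p assume "p \<in> Bset k"
    then have e: "Suc (fst p) * Suc (snd p) = Suc k" by (simp add: Bset_def)
    have "Suc (fst p) \<le> Suc k" using e by (metis le_add1 mult_Suc_right)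
    moreover have "Suc (snd p) \<le> Suc k" using e by (metis le_add1 mult_Suc)
    ultimately show "p \<in> {..k} \<times> {..k}" by (cases p) auto
  qed
qed simp

lemma Bset_card: "card (Bset k) = divisor_count (Suc k)"
proof -
  have "bij_betw (\<lambda>p. Suc (fst p)) (Bset k) {d. d dvd Suc k}"
  proof (rule bij_betw_imageI)
    show "inj_on (\<lambda>p. Suc (fst p)) (Bset k)"
    proof (rule inj_onI)
      fix p q assume p: "p \<in> Bset k" and q: "q \<in> Bset k" and e: "Suc (fst p) = Suc (fst q)"
      have "Suc (fst p) * Suc (snd p) = Suc (fst p) * Suc (snd q)" using p q e by (simp add: Bset_def)
      then have "Suc (snd p) = Suc (snd q)" by (metis Zero_not_Suc mult_left_cancel)
      then have "snd p = snd q" by simp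
      with e show "p = q" by (simp add: prod_eq_iff)
    qed
    show "(\<lambda>p. Suc (fst p)) ` Bset k = {d. d dvd Suc k}"
    proof
      show "(\<lambda>p. Suc (fst p)) ` Bset k \<subseteq> {d. d dvd Suc k}"
      proof
        fix d assume "d \<in> (\<lambda>p. Suc (fst p)) ` Bset k"
        then obtain p where "p \<in> Bset k" "d = Suc (fst p)" by blast
        then have "Suc k = d * Suc (snd p)" by (simp add: Bset_def)
        then show "d \<in> {d. d dvd Suc k}" by (simp add: dvdI)
      qed
      show "{d. d dvd Suc k} \<subseteq> (\<lambda>p. Suc (fst p)) ` Bset k"
      proof
        fix d assume "d \<in> {d. d dvd Suc k}"
        then obtain q where q: "Suc k = d * q" by auto
        then have d0: "d > 0" and q0: "q > 0" by (auto intro: gr0I)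
        have s1: "Suc (d - 1) = d" using d0 by simp
        have s2: "Suc (q - 1) = q" using q0 by simp
        have "(d - 1, q - 1) \<in> Bset k"
          unfolding Bset_def mem_Collect_eq fst_conv snd_conv s1 s2 using q by simp
        moreover have "d = Suc (fst (d - 1, q - 1))" using d0 by simp
        ultimately show "d \<in> (\<lambda>p. Suc (fst p)) ` Bset k" by blast
      qed
    qed
  qed
  then show ?thesis unfolding divisor_count_def by (rule bij_betw_same_card)
qed

lemma bij_snd_Bset: "bij_betw snd (Sigma UNIV Bset) UNIV"
proof (rule bij_betw_imageI)
  show "inj_on snd (Sigma UNIV Bset)"
    by (rule inj_onI) (auto simp: Bset_def)
  show "snd ` Sigma UNIV Bset = UNIV"
  proof (rule set_eqI, rule iffI)
    fix p :: "nat \<times> nat"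
    have "(Suc (fst p) * Suc (snd p) - 1, p) \<in> Sigma UNIV Bset" by (simp add: Bset_def)
    then show "p \<in> snd ` Sigma UNIV Bset" by force
  qed simp
qed

lemma double_series:
  fixes F :: "nat \<Rightarrow> complex" and C \<alpha> :: real
  assumes a: "\<alpha> > 1" and bd: "\<And>k. k \<ge> 1 \<Longrightarrow> norm (F k) \<le> C * real k powr (-\<alpha>)"
  shows "(\<Sum>m. \<Sum>n. F (Suc m * Suc n)) = (\<Sum>k. of_nat (divisor_count (Suc k)) * F (Suc k))"
proof -
  define A where "A p = F (Suc (fst p) * Suc (snd p))" for p
  define w where "w n = real (Suc n) powr (-\<alpha>)" for n
  have C0: "C \<ge> 0" using bd[of 1] by (auto intro: order_trans[OF norm_ge_zero])
  have w0: "w n \<ge> 0" for n by (simp add: w_def)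
  have wsum: "w summable_on UNIV"
  proof -
    have "summable (\<lambda>n. real n powr (-\<alpha>))" using a summable_real_powr_iff by simp
    then have "summable (\<lambda>n. real (n + 1) powr (-\<alpha>))"
      by (rule summable_ignore_initial_segment)
    then have "summable (\<lambda>n. w n)" by (simp add: w_def)
    then show ?thesis using summable_on_UNIV_nonneg_real_iff[of w] w0 by simp
  qed
  have Ab: "norm (A (m, n)) \<le> C * w m * w n" for m n
  proof -
    have "norm (A (m, n)) \<le> C * real (Suc m * Suc n) powr (-\<alpha>)"
      unfolding A_def using bd[of "Suc m * Suc n"] by simp
    also have "real (Suc m * Suc n) powr (-\<alpha>) = w m * w n"
      unfolding w_def by (simp only: of_nat_mult powr_mult of_nat_0_le_iff)
    finally show ?thesis by (simp add: algebra_simps)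
  qed
  have inner_abs: "(\<lambda>n. norm (A (m, n))) summable_on UNIV" for m
  proof (rule Infinite_Sum.abs_summable_on_comparison_test)
    have "(\<lambda>n. (C * w m) * w n) summable_on UNIV" by (rule summable_on_cmult_right[OF wsum])
    then show "(\<lambda>n. norm (C * w m * w n)) summable_on UNIV" using C0 w0 by simp
    fix n show "norm (A (m, n)) \<le> norm (C * w m * w n)" using Ab[of m n] C0 w0 by simp
  qed
  have Aabs: "(\<lambda>p. norm (A p)) summable_on Sigma UNIV (\<lambda>_. UNIV)"
  proof (subst Infinite_Sum.abs_summable_on_Sigma_iff, intro conjI ballI)
    show "(\<lambda>n. norm (A (m, n))) summable_on UNIV" for m by (rule inner_abs)
    show "(\<lambda>m. norm (\<Sum>\<^sub>\<infinity>n\<in>UNIV. norm (A (m, n)))) summable_on UNIV"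
    proof (rule Infinite_Sum.abs_summable_on_comparison_test)
      have "(\<lambda>m. (C * infsum w UNIV) * w m) summable_on UNIV" by (rule summable_on_cmult_right[OF wsum])
      moreover have "infsum w UNIV \<ge> 0" using w0 by (intro infsum_nonneg) auto
      ultimately show "(\<lambda>m. norm (C * infsum w UNIV * w m)) summable_on UNIV" using C0 w0 by simp
      fix m
      have "(\<Sum>\<^sub>\<infinity>n\<in>UNIV. norm (A (m, n))) \<le> (\<Sum>\<^sub>\<infinity>n\<in>UNIV. (C * w m) * w n)"
        using inner_abs[of m] summable_on_cmult_right[OF wsum, of "C * w m"] Ab by (intro infsum_mono) auto
      also have "\<dots> = C * infsum w UNIV * w m" by (subst infsum_cmult_right') (simp add: algebra_simps)
      finally have 1: "(\<Sum>\<^sub>\<infinity>n\<in>UNIV. norm (A (m, n))) \<le> C * infsum w UNIV * w m" .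
      have 2: "(\<Sum>\<^sub>\<infinity>n\<in>UNIV. norm (A (m, n))) \<ge> 0" by (intro infsum_nonneg) auto
      have 3: "infsum w UNIV \<ge> 0" using w0 by (intro infsum_nonneg) auto
      show "norm (\<Sum>\<^sub>\<infinity>n\<in>UNIV. norm (A (m, n))) \<le> norm (C * infsum w UNIV * w m)"
        using 1 2 3 C0 w0[of m] by simp
    qed
  qed
  then have Asum: "A summable_on UNIV" by (simp add: abs_summable_summable)
  have inner_sum: "(\<lambda>n. A (m, n)) summable_on UNIV" for m
    by (rule abs_summable_summable[OF inner_abs])
  have Asum': "(\<lambda>(x,y). A (x, y)) summable_on Sigma UNIV (\<lambda>_. UNIV)" using Asum by simp
  have L1: "(\<Sum>m. \<Sum>n. F (Suc m * Suc n)) = (\<Sum>m. infsum (\<lambda>n. A (m, n)) UNIV)"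
    using suminf_infsum[OF inner_sum] by (simp add: A_def)
  have outer_sum: "(\<lambda>m. infsum (\<lambda>n. A (m, n)) UNIV) summable_on UNIV"
    using summable_on_Sigma_banach[OF Asum'] by simp
  have L2: "(\<Sum>m. infsum (\<lambda>n. A (m, n)) UNIV) = infsum A UNIV"
    using suminf_infsum[OF outer_sum] infsum_Sigma'_banach[OF Asum'] by simp
  have S1: "(\<lambda>x. A (snd x)) summable_on Sigma UNIV Bset"
    using summable_on_reindex_bij_betw[OF bij_snd_Bset, of A] Asum by simp
  have S1': "(\<lambda>(x,y). A y) summable_on Sigma UNIV Bset" using S1 by (simp add: case_prod_unfold)
  have R1: "infsum A UNIV = infsum (\<lambda>k. infsum A (Bset k)) UNIV"
    using infsum_reindex_bij_betw[OF bij_snd_Bset, of A] infsum_Sigma'_banach[OF S1']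
    by (simp add: case_prod_unfold)
  have Rsum: "(\<lambda>k. infsum A (Bset k)) summable_on UNIV"
    using summable_on_Sigma_banach[OF S1'] by simp
  have R2: "infsum A (Bset k) = of_nat (divisor_count (Suc k)) * F (Suc k)" for k
  proof -
    have "infsum A (Bset k) = sum A (Bset k)" using Bset_finite by simp
    also have "\<dots> = sum (\<lambda>_. F (Suc k)) (Bset k)"
      by (rule sum.cong) (auto simp: A_def Bset_def)
    also have "\<dots> = of_nat (card (Bset k)) * F (Suc k)" by simp
    finally show ?thesis by (simp add: Bset_card)
  qed
  have "(\<Sum>k. of_nat (divisor_count (Suc k)) * F (Suc k)) = infsum (\<lambda>k. infsum A (Bset k)) UNIV"
    using suminf_infsum[OF Rsum] by (simp add: R2)
  then show ?thesis using L1 L2 R1 by simp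
qed

theorem corollary2:
  fixes f :: "real \<Rightarrow> complex" and \<alpha> :: real
  assumes "\<alpha> > 1"
    and "f \<in> M_class \<alpha>"
    and "\<exists>g \<in> M_class \<alpha>. \<forall>x>0. g x = muentz f x"
  shows "\<forall>x>0. voronoi f x = muentz (muentz f) x"
proof -
  have a: "\<alpha> > 1" by fact
  obtain g where gM: "g \<in> M_class \<alpha>" and gP: "\<And>x. x > 0 \<Longrightarrow> g x = muentz f x"
    using assms(3) by blast
  have fc: "continuous_on {0..} f" by (rule M_cont[OF assms(2)])
  have gc: "continuous_on {0..} g" by (rule M_cont[OF gM])
  obtain Kf where Kf: "\<And>t. t \<ge> 0 \<Longrightarrow> norm (f t) \<le> Kf \<and> (t > 0 \<longrightarrow> norm (f t) \<le> Kf * t powr (-\<alpha>))"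
  proof -
    have "\<alpha> \<ge> 0" using a by simp
    from bound_from_bigo[OF fc M_bigo[OF assms(2)] this] obtain K where
      "\<forall>t\<ge>0. norm (f t) \<le> K \<and> (t > 0 \<longrightarrow> norm (f t) \<le> K * t powr (-\<alpha>))" by blast
    then show ?thesis using that by blast
  qed
  obtain Kg where Kg: "\<And>t. t \<ge> 0 \<Longrightarrow> norm (g t) \<le> Kg \<and> (t > 0 \<longrightarrow> norm (g t) \<le> Kg * t powr (-\<alpha>))"
  proof -
    have "\<alpha> \<ge> 0" using a by simp
    from bound_from_bigo[OF gc M_bigo[OF gM] this] obtain K where
      "\<forall>t\<ge>0. norm (g t) \<le> K \<and> (t > 0 \<longrightarrow> norm (g t) \<le> K * t powr (-\<alpha>))" by blast
    then show ?thesis using that by blast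
  qed
  have fc': "continuous_on {0<..} f" by (rule continuous_on_subset[OF fc]) auto
  have gc': "continuous_on {0<..} g" by (rule continuous_on_subset[OF gc]) auto
  have fbd: "\<And>t. t > 0 \<Longrightarrow> norm (f t) \<le> Kf \<and> norm (f t) \<le> Kf * t powr (-\<alpha>)" using Kf by auto
  have gbd: "\<And>t. t > 0 \<Longrightarrow> norm (g t) \<le> Kg \<and> norm (g t) \<le> Kg * t powr (-\<alpha>)" using Kg by auto
  interpret F: core f Kf \<alpha> by unfold_locales (use fc' a fbd in auto)
  have gabs: "g absolutely_integrable_on {0..}"
    using abs_int_decay[OF gc' a gbd] abs_integrable_0_open by blast
  have fabs: "f absolutely_integrable_on {0..}"
    using F.phi_abs abs_integrable_0_open by blast
  define I where "I = integral {0..} f"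
  have Sbd: "norm (\<Sum>n. f (real (Suc n) * x)) \<le> Kf * F.Z * x powr (-\<alpha>)" if x: "x > 0" for x
  proof -
    have "norm (\<Sum>n. f (real (Suc n) * x)) \<le> (\<Sum>n. norm (f (real (Suc n) * x)))"
      by (rule summable_norm[OF F.summable_G[OF x]])
    also have "\<dots> \<le> (\<Sum>n. Kf * x powr (-\<alpha>) * real (Suc n) powr (-\<alpha>))"
      by (intro suminf_le F.summable_G[OF x] summable_mult[OF F.Z_summable] F.bd_scaled x allI)
    also have "\<dots> = Kf * x powr (-\<alpha>) * F.Z"
      unfolding F.Z_def by (rule suminf_mult[OF F.Z_summable])
    finally show ?thesis by (simp add: algebra_simps)
  qed
  have I0: "I = 0"
  proof -
    define c where "c = Kg + Kf * F.Z"
    have ev: "\<forall>\<^sub>F x in at_top. norm I \<le> c * x powr (1 - \<alpha>)"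
      using eventually_gt_at_top[of "0::real"]
    proof eventually_elim
      case (elim x)
      have "muentz f x = (\<Sum>n. f (real (Suc n) * x)) - of_real (1 / x) * I"
        unfolding muentz_def I_def ..
      then have "of_real (1 / x) * I = (\<Sum>n. f (real (Suc n) * x)) - g x" using gP[OF elim] by simp
      then have eq: "of_real (1 / x) * I = (\<Sum>n. f (real (Suc n) * x)) - g x" .
      have "norm I / x = norm (of_real (1 / x) * I)" using elim by (simp add: norm_mult norm_divide)
      also have "\<dots> = norm ((\<Sum>n. f (real (Suc n) * x)) - g x)" by (simp only: eq)
      also have "\<dots> \<le> norm (\<Sum>n. f (real (Suc n) * x)) + norm (g x)" by (rule norm_triangle_ineq4)
      also have "\<dots> \<le> Kf * F.Z * x powr (-\<alpha>) + Kg * x powr (-\<alpha>)"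
        using Sbd[OF elim] gbd[OF elim] by linarith
      also have "\<dots> = c * x powr (-\<alpha>)" by (simp add: c_def algebra_simps)
      finally have "norm I \<le> c * x powr (-\<alpha>) * x" using elim by (simp add: field_simps)
      also have "c * x powr (-\<alpha>) * x = c * x powr (1 - \<alpha>)"
      proof -
        have "x powr (-\<alpha> + 1) = x powr (-\<alpha>) * x powr 1" by (rule powr_add)
        then have "x powr (1 - \<alpha>) = x powr (-\<alpha>) * x" using elim by simp
        then show ?thesis by simp
      qed
      finally show ?case .
    qed
    have lim: "((\<lambda>x. c * x powr (1 - \<alpha>)) \<longlongrightarrow> 0) at_top" using a by real_asymp
    have "norm I \<le> 0"
      by (rule tendsto_le[OF trivial_limit_at_top_linorder lim tendsto_const ev])
    then show ?thesis by simp
  qed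
  have Pf: "muentz f y = (\<Sum>n. f (real (Suc n) * y))" for y
    unfolding muentz_def using I0 by (simp add: I_def)
  show ?thesis
  proof (intro allI impI)
    fix x :: real assume x: "x > 0"
    define Fk where "Fk k = f (real k * x)" for k
    have Fbd: "norm (Fk k) \<le> (Kf * x powr (-\<alpha>)) * real k powr (-\<alpha>)" if "k \<ge> 1" for k
    proof -
      have "norm (Fk k) \<le> Kf * (real k * x) powr (-\<alpha>)" unfolding Fk_def using fbd[of "real k * x"] that x by simp
      also have "(real k * x) powr (-\<alpha>) = real k powr (-\<alpha>) * x powr (-\<alpha>)" using x by (simp add: powr_mult)
      finally show ?thesis by (simp add: algebra_simps)
    qed
    have partA: "(\<Sum>m. muentz f (real (Suc m) * x)) = (\<Sum>k. of_nat (divisor_count (Suc k)) * f (real (Suc k) * x))"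
    proof -
      have "(\<Sum>m. muentz f (real (Suc m) * x)) = (\<Sum>m. \<Sum>n. Fk (Suc m * Suc n))"
        unfolding Pf Fk_def by (simp add: algebra_simps)
      also have "\<dots> = (\<Sum>k. of_nat (divisor_count (Suc k)) * Fk (Suc k))"
        by (rule double_series[OF a Fbd])
      finally show ?thesis by (simp add: Fk_def)
    qed
    define \<phi> where "\<phi> y = f (x * y)" for y
    define K' where "K' = Kf * max 1 (x powr (-\<alpha>))"
    have Kf0: "Kf \<ge> 0" by (rule F.K_nonneg)
    have phic: "continuous_on {0<..} \<phi>"
    proof -
      have c1: "continuous_on {0<..} (\<lambda>y. x * y)" by (intro continuous_intros)
      have c2: "(\<lambda>y. x * y) ` {0<..} \<subseteq> {0<..}"
      proof (rule image_subsetI)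
        fix y :: real assume "y \<in> {0<..}"
        then show "x * y \<in> {0<..}" using x by simp
      qed
      show ?thesis unfolding \<phi>_def by (rule continuous_on_compose2[OF fc' c1 c2])
    qed
    have phibd: "norm (\<phi> t) \<le> K' \<and> norm (\<phi> t) \<le> K' * t powr (-\<alpha>)" if t: "t > 0" for t
    proof
      have xt: "x * t > 0" using x t by simp
      show "norm (\<phi> t) \<le> K'"
      proof -
        have "Kf * 1 \<le> Kf * max 1 (x powr (-\<alpha>))" using Kf0 by (intro mult_left_mono) auto
        then show ?thesis using fbd[OF xt] by (simp add: \<phi>_def K'_def)
      qed
      have "norm (\<phi> t) \<le> Kf * (x * t) powr (-\<alpha>)" using fbd[OF xt] unfolding \<phi>_def by simp
      also have "\<dots> = (Kf * x powr (-\<alpha>)) * t powr (-\<alpha>)" using x t by (simp add: powr_mult)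
      also have "\<dots> \<le> K' * t powr (-\<alpha>)" unfolding K'_def using Kf0
        by (intro mult_right_mono mult_left_mono) auto
      finally show "norm (\<phi> t) \<le> K' * t powr (-\<alpha>)" .
    qed
    interpret P: core \<phi> K' \<alpha> by unfold_locales (use phic a phibd in auto)
    have phiI: "integral {0<..} \<phi> = 0"
    proof -
      have "integral {0..} \<phi> = integral {x * 0..} f / x"
        unfolding \<phi>_def by (rule scale_integral(2)) (use x fabs in auto)
      then show ?thesis using I0 unfolding I_def by (simp add: integral_0_open)
    qed
    define G where "G t = g (x * t)" for t
    have Gabs0: "G absolutely_integrable_on {0..}"
      unfolding G_def by (rule scale_integral(1)) (use x gabs in auto)
    have GI: "integral {0..} G = integral {0..} g / x"
      unfolding G_def using scale_integral(2)[where c=x and f=g and a=0] x gabs by simp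
    have Gabs: "G absolutely_integrable_on {0<..}" using Gabs0 abs_integrable_0_open by blast
    have Geq: "G t = (\<Sum>n. \<phi> (real (Suc n) * t))" if t: "t > 0" for t
      unfolding G_def \<phi>_def using gP[of "x * t"] x t by (simp add: Pf algebra_simps)
    have core: "integral {0<..} G = integral {0<..} (\<lambda>t. \<phi> t * of_real (ln t))"
      by (rule P.core_main[OF phiI Gabs Geq])
    have Pint: "integral {0..} (muentz f) = integral {0..} g"
      by (simp only: integral_0_open) (rule integral_cong, simp add: gP)
    have philn_int: "(\<lambda>t. \<phi> t * of_real (ln t)) integrable_on {0<..}"
      using P.phi_ln_abs by (auto simp: absolutely_integrable_on_def)
    have phi_int: "\<phi> integrable_on {0<..}"
      using P.phi_abs by (auto simp: absolutely_integrable_on_def)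
    have partB: "integral {0..} (\<lambda>y. f (x * y) * complex_of_real (ln y + 2 * euler_mascheroni))
        = complex_of_real (1 / x) * integral {0..} (muentz f)"
    proof -
      have "integral {0..} (\<lambda>y. f (x * y) * complex_of_real (ln y + 2 * euler_mascheroni))
          = integral {0<..} (\<lambda>y. \<phi> y * of_real (ln y) + \<phi> y * of_real (2 * euler_mascheroni))"
        by (simp add: integral_0_open \<phi>_def algebra_simps)
      also have "\<dots> = integral {0<..} (\<lambda>y. \<phi> y * of_real (ln y)) + integral {0<..} \<phi> * of_real (2 * euler_mascheroni)"
        using integral_add[OF philn_int integrable_on_mult_left[OF phi_int]] by simp
      also have "\<dots> = integral {0<..} G" using phiI core by simp
      also have "\<dots> = integral {0..} g / x" using GI by (simp add: integral_0_open)
      finally show ?thesis using Pint by (simp add: divide_inverse mult.commute)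
    qed
    show "voronoi f x = muentz (muentz f) x"
      unfolding voronoi_def using partA partB by (simp add: muentz_def[of "muentz f"])
  qed
qed

end
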